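(* Let $s(t)\in\mathbb{R}^n$ and $\tilde a(t)\in\mathbb{R}^h$ evolve according to $$\begin{bmatrix} M & 0\\ 0 & P^{-1}\end{bmatrix}\begin{bmatrix}\dot s\\ \dot{\tilde a}\end{bmatrix} + \begin{bmatrix} C+K & \phi\\ -\phi^\top & \phi^\top R^{-1}\phi + \lambda P^{-1}\end{bmatrix}\begin{bmatrix} s\\ \tilde a\end{bmatrix} = \begin{bmatrix} d\\ \phi^\top R^{-1}\bar\epsilon - P^{-1}\lambda a - P^{-1}\dot a\end{bmatrix},$$ $$\frac{d}{dt}\big(P^{-1}\big) = P^{-1}\big(2\lambda P - Q + P\phi^\top R^{-1}\phi P\big)P^{-1},$$ and assume $P^{-1}$ is uniformly positive definite and uniformly bounded. Define $\mathcal{M} = \begin{bmatrix} M & 0\\ 0 & P^{-1}\end{bmatrix}$. Then there is a constant $\alpha>0$, depending on $\phi, R, Q, K, M$ and $\lambda$, such that $\left\|\begin{bmatrix} s\\ \tilde a\end{bmatrix}\right\|$ converges exponentially with rate $\alpha$ to the bound $$\lim_{t\to\infty}\left\|\begin{bmatrix} s\\ \tilde a\end{bmatrix}\right\| \le \frac{1}{\alpha\,\lambda_{\min}(\mathcal{M})}\Big(\sup_t\|d\| + \sup_t\|\phi^\top R^{-1}\bar\epsilon\| + \lambda_{\max}(P^{-1})\sup_t\|\lambda a + \dot a\|\Big).$$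
   Context: $M=M(q(t))$ is a uniformly positive definite, uniformly bounded symmetric inertia matrix and $C$ the Coriolis matrix with $\dot M - 2C$ skew-symmetric; $K$ is a uniformly positive definite, bounded gain matrix; $Q$ and $R$ are positive definite gain matrices (with $Q$ uniformly positive definite); $\lambda\ge 0$ is a damping gain; $\phi(t)\in\mathbb{R}^{n\times h}$ is a bounded time-varying matrix; $a(t)$ is a differentiable parameter vector; $d(t)$ and $\bar\epsilon(t)$ are bounded disturbance signals. $\lambda_{\min}(\cdot)$ and $\lambda_{\max}(\cdot)$ denote the minimum and maximum eigenvalue of the argument over all time. *)

theory Defs
  imports "HOL-Analysis.Analysis"
begin

text \<open>Time ranges over t \<ge> 0. Matrices are real^'c^'r (rows 'r, columns 'c).\<close>

definition unif_pd :: "(real \<Rightarrow> real^'k^'k) \<Rightarrow> bool" where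
  "unif_pd A \<longleftrightarrow> (\<exists>c>0. \<forall>t\<ge>0. \<forall>x. c * (norm x)\<^sup>2 \<le> x \<bullet> (A t *v x))"

definition unif_bdd :: "(real \<Rightarrow> 'a::real_normed_vector) \<Rightarrow> bool" where
  "unif_bdd f \<longleftrightarrow> (\<exists>B. \<forall>t\<ge>0. norm (f t) \<le> B)"

definition eigvals :: "real^'k^'k \<Rightarrow> real set" where
  "eigvals A = {\<mu>. \<exists>v. v \<noteq> 0 \<and> A *v v = \<mu> *\<^sub>R v}"

definition lam_min :: "real^'k^'k \<Rightarrow> real" where
  "lam_min A = Min (eigvals A)"

definition lam_max :: "real^'k^'k \<Rightarrow> real" where
  "lam_max A = Max (eigvals A)"

definition lam_min_all :: "(real \<Rightarrow> real^'k^'k) \<Rightarrow> real" where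
  "lam_min_all A = Inf ((\<lambda>t. lam_min (A t)) ` {0..})"

definition lam_max_all :: "(real \<Rightarrow> real^'k^'k) \<Rightarrow> real" where
  "lam_max_all A = Sup ((\<lambda>t. lam_max (A t)) ` {0..})"

definition sup_norm :: "(real \<Rightarrow> 'a::real_normed_vector) \<Rightarrow> real" where
  "sup_norm f = Sup ((\<lambda>t. norm (f t)) ` {0..})"

definition block_diag :: "real^'n^'n \<Rightarrow> real^'h^'h \<Rightarrow> real^('n + 'h)^('n + 'h)" where
  "block_diag A B = (\<chi> i j. case (i, j) of (Inl a, Inl b) \<Rightarrow> A $ a $ b
                                         | (Inr a, Inr b) \<Rightarrow> B $ a $ b
                                         | _ \<Rightarrow> 0)"

definition stack :: "real^'n \<Rightarrow> real^'h \<Rightarrow> real^('n + 'h)" where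
  "stack x y = (\<chi> i. case i of Inl a \<Rightarrow> x $ a | Inr b \<Rightarrow> y $ b)"

end

theory Submission
  imports Defs
begin

lemma norm_mv_le: "norm ((A::real^'n^'m) *v x) \<le> norm A * norm x"
proof -
  have "(norm (A *v x))\<^sup>2 = (\<Sum>i\<in>UNIV. ((A *v x) $ i)\<^sup>2)"
    by (simp add: norm_vec_def L2_set_def sum_nonneg)
  also have "\<dots> \<le> (\<Sum>i\<in>UNIV. (norm (A $ i))\<^sup>2 * (norm x)\<^sup>2)"
  proof (rule sum_mono)
    fix i
    have "\<bar>(A *v x) $ i\<bar> \<le> norm (A $ i) * norm x"
      by (simp add: matrix_vector_mul_component Cauchy_Schwarz_ineq2)
    then have "\<bar>(A *v x) $ i\<bar>\<^sup>2 \<le> (norm (A $ i) * norm x)\<^sup>2"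
      by (rule power_mono) simp
    then show "((A *v x) $ i)\<^sup>2 \<le> (norm (A $ i))\<^sup>2 * (norm x)\<^sup>2"
      by (simp add: power_mult_distrib)
  qed
  also have "\<dots> = (\<Sum>i\<in>UNIV. (norm (A $ i))\<^sup>2) * (norm x)\<^sup>2"
    by (simp add: sum_distrib_right)
  also have "(\<Sum>i\<in>UNIV. (norm (A $ i))\<^sup>2) = (norm A)\<^sup>2"
    unfolding norm_vec_def[of A] L2_set_def by (simp add: sum_nonneg)
  also have "(norm A)\<^sup>2 * (norm x)\<^sup>2 = (norm A * norm x)\<^sup>2" by (simp add: power_mult_distrib)
  finally show ?thesis
    by (rule power2_le_imp_le) simp
qed

lemma bb_mv: "bounded_bilinear (\<lambda>(A::real^'n^'m) x. A *v x)"
proof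
  fix a a' :: "real^'n^'m" and b b' :: "real^'n" and r :: real
  show "(a + a') *v b = a *v b + a' *v b" by (simp add: matrix_vector_mult_add_rdistrib)
  show "a *v (b + b') = a *v b + a *v b'" by (simp add: matrix_vector_right_distrib)
  show "(r *\<^sub>R a) *v b = r *\<^sub>R (a *v b)"
    by (simp add: vec_eq_iff matrix_vector_mult_def sum_distrib_left algebra_simps)
  show "a *v (r *\<^sub>R b) = r *\<^sub>R (a *v b)" by (simp add: matrix_vector_mult_scaleR)
next
  show "\<exists>K. \<forall>a b. norm ((a::real^'n^'m) *v b) \<le> norm a * norm b * K"
    by (rule exI[of _ 1]) (simp add: norm_mv_le)
qed

lemma inner_transpose: "(x::real^'m) \<bullet> ((A::real^'n^'m) *v y) = (transpose A *v x) \<bullet> y"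
  by (metis dot_lmul_matrix transpose_matrix_vector)

lemma pd_invertible:
  assumes "\<forall>x. x \<noteq> 0 \<longrightarrow> x \<bullet> ((A::real^'n^'n) *v x) > 0"
  shows "invertible A"
proof -
  have "\<forall>x. A *v x = 0 \<longrightarrow> x = 0" using assms by force
  then show ?thesis using matrix_left_invertible_ker invertible_left_inverse by blast
qed

lemma matrix_inv_works:
  assumes "invertible (A::real^'n^'n)"
  shows "A ** matrix_inv A = mat 1" "matrix_inv A ** A = mat 1"
  using someI_ex[OF assms[unfolded invertible_def]] unfolding matrix_inv_def by auto

lemma unif_pd_pos:
  assumes "unif_pd A" "t \<ge> 0"
  shows "\<forall>x. x \<noteq> 0 \<longrightarrow> x \<bullet> (A t *v x) > 0"
proof -
  obtain c where c: "c > 0" "\<forall>t\<ge>0. \<forall>x. c * (norm x)\<^sup>2 \<le> x \<bullet> (A t *v x)"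
    using assms unfolding unif_pd_def by auto
  show ?thesis
  proof (intro allI impI)
    fix x :: "real^'a" assume "x \<noteq> 0"
    then have "c * (norm x)\<^sup>2 > 0" using c by simp
    then show "x \<bullet> (A t *v x) > 0" using c assms(2) by (meson less_le_trans)
  qed
qed

lemma inner_sym:
  assumes "transpose A = (A::real^'n^'n)"
  shows "v \<bullet> (A *v w) = w \<bullet> (A *v v)"
  by (metis assms inner_transpose inner_commute)

lemma quad_nonneg_lin0:
  fixes c k :: real
  assumes "\<forall>t. 0 \<le> 2 * t * c + t\<^sup>2 * k" "k \<ge> 0"
  shows "c = 0"
proof (rule ccontr)
  assume "c \<noteq> 0"
  have "0 \<le> 2 * (- c / (k + 1)) * c + (- c / (k + 1))\<^sup>2 * k" using assms(1) by blast
  also have "\<dots> = c\<^sup>2 * (- k - 2) / (k + 1)\<^sup>2"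
    using assms(2) by (simp add: power_divide) (simp add: divide_simps power2_eq_square; algebra)
  also have "\<dots> < 0" using \<open>c \<noteq> 0\<close> assms(2)
    by (intro divide_neg_pos mult_pos_neg) auto
  finally show False by simp
qed

lemma sym_eig_min:
  assumes sym: "transpose A = (A::real^'n^'n)"
  shows "\<exists>v \<mu>. v \<noteq> 0 \<and> A *v v = \<mu> *\<^sub>R v \<and> (\<forall>x. \<mu> * (norm x)\<^sup>2 \<le> x \<bullet> (A *v x))"
proof -
  have cont: "continuous_on (sphere 0 1) (\<lambda>x::real^'n. x \<bullet> (A *v x))"
    by (intro continuous_intros linear_continuous_on matrix_vector_mul_bounded_linear)
  have ne: "sphere (0::real^'n) 1 \<noteq> {}" by simp
  obtain v where v: "v \<in> sphere 0 1" "\<forall>y\<in>sphere 0 1. v \<bullet> (A *v v) \<le> y \<bullet> (A *v y)"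
    using continuous_attains_inf[OF compact_sphere ne cont] by blast
  define \<mu> where "\<mu> = v \<bullet> (A *v v)"
  have nv: "norm v = 1" using v by simp
  have low: "\<mu> * (norm x)\<^sup>2 \<le> x \<bullet> (A *v x)" for x
  proof (cases "x = 0")
    case True then show ?thesis by simp
  next
    case False
    then have nx: "norm x > 0" by simp
    have "(x /\<^sub>R norm x) \<in> sphere 0 1" using nx by simp
    then have "\<mu> \<le> (x /\<^sub>R norm x) \<bullet> (A *v (x /\<^sub>R norm x))" using v \<mu>_def by blast
    also have "\<dots> = (x \<bullet> (A *v x)) / (norm x)\<^sup>2"
      using nx by (simp add: matrix_vector_mult_scaleR power2_eq_square field_simps)
    finally show ?thesis using nx by (simp add: field_simps)
  qed
  have key: "w \<bullet> (A *v v - \<mu> *\<^sub>R v) = 0" for w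
  proof -
    define k where "k = w \<bullet> (A *v w) - \<mu> * (norm w)\<^sup>2"
    have k0: "k \<ge> 0" using low[of w] k_def by simp
    have "0 \<le> 2 * t * (w \<bullet> (A *v v - \<mu> *\<^sub>R v)) + t\<^sup>2 * k" for t
    proof -
      have "\<mu> * (norm (v + t *\<^sub>R w))\<^sup>2 \<le> (v + t *\<^sub>R w) \<bullet> (A *v (v + t *\<^sub>R w))" by (rule low)
      moreover have "(norm (v + t *\<^sub>R w))\<^sup>2 = 1 + 2 * t * (v \<bullet> w) + t\<^sup>2 * (norm w)\<^sup>2"
      proof -
        have vv: "v \<bullet> v = 1" using nv by (metis power2_norm_eq_inner one_power2)
        show ?thesis unfolding power2_norm_eq_inner
          by (simp add: inner_add_left inner_add_right vv inner_commute algebra_simps power2_eq_square)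
      qed
      moreover have "(v + t *\<^sub>R w) \<bullet> (A *v (v + t *\<^sub>R w)) = \<mu> + 2 * t * (w \<bullet> (A *v v)) + t\<^sup>2 * (w \<bullet> (A *v w))"
        using inner_sym[OF sym, of v w] \<mu>_def
        by (simp add: matrix_vector_right_distrib matrix_vector_mult_scaleR inner_add power2_eq_square algebra_simps)
      ultimately show ?thesis
        by (simp add: k_def inner_diff_right inner_commute[of w v] algebra_simps power2_eq_square)
    qed
    then show ?thesis using quad_nonneg_lin0 k0 by blast
  qed
  have "A *v v = \<mu> *\<^sub>R v"
    using key[of "A *v v - \<mu> *\<^sub>R v"] by simp
  moreover have "v \<noteq> 0" using nv by auto
  ultimately show ?thesis using low by blast
qed

lemma sym_eig_orth:
  assumes sym: "transpose A = (A::real^'n^'n)" and "A *v v = \<mu> *\<^sub>R v" "A *v w = \<nu> *\<^sub>R w" "\<mu> \<noteq> \<nu>"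
  shows "v \<bullet> w = 0"
proof -
  have "\<nu> * (v \<bullet> w) = v \<bullet> (A *v w)" using assms by simp
  also have "\<dots> = w \<bullet> (A *v v)" by (rule inner_sym[OF sym])
  also have "\<dots> = \<mu> * (v \<bullet> w)" using assms by (simp add: inner_commute)
  finally show ?thesis using assms(4) by simp
qed

lemma finite_eigvals:
  assumes sym: "transpose A = (A::real^'n^'n)"
  shows "finite (eigvals A)"
proof -
  define f where "f \<mu> = (SOME v. v \<noteq> 0 \<and> A *v v = \<mu> *\<^sub>R v)" for \<mu>
  have f: "f \<mu> \<noteq> 0 \<and> A *v f \<mu> = \<mu> *\<^sub>R f \<mu>" if "\<mu> \<in> eigvals A" for \<mu>
  proof -
    have "\<exists>v. v \<noteq> 0 \<and> A *v v = \<mu> *\<^sub>R v" using that eigvals_def by auto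
    then show ?thesis unfolding f_def by (rule someI_ex)
  qed
  have inj: "inj_on f (eigvals A)"
  proof (rule inj_onI)
    fix \<mu> \<nu> assume "\<mu> \<in> eigvals A" "\<nu> \<in> eigvals A" "f \<mu> = f \<nu>"
    then have "\<mu> *\<^sub>R f \<mu> = \<nu> *\<^sub>R f \<mu>" using f by metis
    then show "\<mu> = \<nu>" using f \<open>\<mu> \<in> eigvals A\<close> by (simp add: scaleR_cancel_right)
  qed
  have "pairwise orthogonal (f ` eigvals A)"
    unfolding pairwise_def orthogonal_def
    using f sym_eig_orth[OF sym] by (metis imageE)
  moreover have "0 \<notin> f ` eigvals A" using f by auto
  ultimately have "independent (f ` eigvals A)" by (rule pairwise_orthogonal_independent)
  then have "finite (f ` eigvals A)" using independent_bound by blast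
  then show ?thesis using inj finite_imageD by blast
qed

lemma eigvals_ne:
  assumes sym: "transpose A = (A::real^'n^'n)"
  shows "eigvals A \<noteq> {}"
  using sym_eig_min[OF sym] unfolding eigvals_def by blast

lemma lam_in:
  assumes sym: "transpose A = (A::real^'n^'n)"
  shows "lam_min A \<in> eigvals A" "lam_max A \<in> eigvals A"
  using finite_eigvals[OF sym] eigvals_ne[OF sym] unfolding lam_min_def lam_max_def by auto

lemma eig_lower:
  assumes "\<mu> \<in> eigvals A" "\<forall>x. c * (norm x)\<^sup>2 \<le> x \<bullet> ((A::real^'n^'n) *v x)"
  shows "c \<le> \<mu>"
proof -
  obtain v where v: "v \<noteq> 0" "A *v v = \<mu> *\<^sub>R v" using assms(1) unfolding eigvals_def by auto
  have "c * (norm v)\<^sup>2 \<le> \<mu> * (norm v)\<^sup>2" using assms(2)[rule_format, of v] v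
    by (simp add: power2_norm_eq_inner)
  then show ?thesis using v by simp
qed

lemma eig_upper:
  assumes "\<mu> \<in> eigvals A"
  shows "\<mu> \<le> norm (A::real^'n^'n)"
proof -
  obtain v where v: "v \<noteq> 0" "A *v v = \<mu> *\<^sub>R v" using assms(1) unfolding eigvals_def by auto
  have "\<bar>\<mu>\<bar> * norm v \<le> norm A * norm v" using norm_mv_le[of A v] v by simp
  then show ?thesis using v by simp
qed

lemma sum_UNIV_plus: "(\<Sum>i\<in>(UNIV::('a::finite + 'b::finite) set). g i) = (\<Sum>a\<in>UNIV. g (Inl a)) + (\<Sum>b\<in>UNIV. g (Inr b))"
proof -
  have "(\<Sum>i\<in>(UNIV::('a + 'b) set). g i) = (\<Sum>i\<in>(UNIV <+> UNIV). g i)" by simp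
  also have "\<dots> = (\<Sum>a\<in>UNIV. g (Inl a)) + (\<Sum>b\<in>UNIV. g (Inr b))"
    by (subst sum.Plus) (simp_all add: comp_def)
  finally show ?thesis .
qed

lemma inner_stack: "stack x y \<bullet> stack u v = x \<bullet> u + y \<bullet> v"
  unfolding inner_vec_def stack_def by (simp add: sum_UNIV_plus)

lemma norm_stack_sq: "(norm (stack x y))\<^sup>2 = (norm x)\<^sup>2 + (norm y)\<^sup>2"
  by (simp add: power2_norm_eq_inner inner_stack)

lemma block_stack: "block_diag A B *v stack x y = stack (A *v x) (B *v y)"
  unfolding block_diag_def stack_def matrix_vector_mult_def
  by (simp add: vec_eq_iff sum_UNIV_plus split: sum.splits)

lemma stack_surj: "z = stack (\<chi> a. z $ Inl a) (\<chi> b. z $ Inr b)"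
  unfolding stack_def by (simp add: vec_eq_iff split: sum.splits)

lemma transpose_block: "transpose (block_diag A B) = block_diag (transpose A) (transpose B)"
  unfolding block_diag_def transpose_def
  by (simp add: vec_eq_iff split: sum.splits)

lemma comparison:
  fixes W W' :: "real \<Rightarrow> real"
  assumes g0: "\<gamma> > 0"
    and der: "\<forall>t\<ge>0. (W has_real_derivative W' t) (at t within {0..})"
    and ineq: "\<forall>t\<ge>0. W' t \<le> - \<gamma> * W t + B"
    and T: "T \<ge> 0"
  shows "W T \<le> exp (- \<gamma> * T) * (W 0 - B / \<gamma>) + B / \<gamma>"
proof -
  define g where "g t = exp (\<gamma> * t) * (W t - B / \<gamma>)" for t
  define g' where "g' t = exp (\<gamma> * t) * \<gamma> * (W t - B / \<gamma>) + exp (\<gamma> * t) * W' t" for t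
  have gd: "(g has_real_derivative g' t) (at t within {0..})" if "t \<ge> 0" for t
    unfolding g_def g'_def using der that
    by (auto intro!: derivative_eq_intros simp: algebra_simps)
  have gneg: "g' t \<le> 0" if "t \<ge> 0" for t
  proof -
    have "g' t = exp (\<gamma> * t) * (\<gamma> * W t - B + W' t)"
      unfolding g'_def using g0 by (simp add: field_simps)
    moreover have "\<gamma> * W t - B + W' t \<le> 0" using ineq that by force
    ultimately show ?thesis by (simp add: mult_nonneg_nonpos)
  qed
  have cont: "continuous_on {0..} g"
    unfolding continuous_on_eq_continuous_within
    using gd DERIV_continuous by (metis atLeast_iff)
  have "g T \<le> g 0"
  proof (rule DERIV_nonpos_imp_decreasing_open[OF T])
    fix x :: real assume x: "0 < x" "x < T"
    have "(g has_real_derivative g' x) (at x within {0<..})"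
      using gd[of x] x by (auto intro: DERIV_subset)
    then have "(g has_real_derivative g' x) (at x)"
      using x at_within_open[of x "{0<..}"] by simp
    then show "\<exists>y. (g has_real_derivative y) (at x) \<and> y \<le> 0" using gneg x by auto
  next
    show "continuous_on {0..T} g" using cont by (rule continuous_on_subset) auto
  qed
  then have "exp (\<gamma> * T) * (W T - B / \<gamma>) \<le> W 0 - B / \<gamma>" unfolding g_def by simp
  then have "W T - B / \<gamma> \<le> exp (- \<gamma> * T) * (W 0 - B / \<gamma>)"
    by (simp add: exp_minus field_simps)
  then show ?thesis by simp
qed

lemma sqrt_exp: "sqrt (exp x) = exp (x / 2)"
proof -
  have "(exp (x/2))\<^sup>2 = exp x" by (simp add: power2_eq_square flip: exp_add)
  then show ?thesis by (metis abs_of_pos exp_gt_zero real_sqrt_abs)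
qed

lemma final_arith:
  fixes N A0 m1 \<beta> \<gamma> L \<kappa> \<alpha> D D1 t :: real
  assumes pos: "m1 > 0" "\<beta> > 0" "\<gamma> > 0" "L > 0" "\<kappa> \<ge> 1" "\<alpha> > 0"
    and al: "\<alpha> \<le> \<gamma> / 2" "\<alpha> \<le> sqrt (\<beta> * \<gamma> * m1) / (\<kappa> * L)"
    and D: "D1 \<ge> 0" "D1 \<le> \<kappa> * D" and t: "t \<ge> 0" and N: "N \<ge> 0" and A0: "A0 \<ge> 0"
    and main: "m1 * N\<^sup>2 \<le> exp (- \<gamma> * t) * A0 + D1\<^sup>2 / \<beta> / \<gamma>"
  shows "N \<le> sqrt (A0 / m1) * exp (- \<alpha> * t) + 1 / (\<alpha> * L) * D"
proof -
  define X where "X = exp (- \<gamma> * t) * (A0 / m1)"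
  define Y where "Y = D1\<^sup>2 / (\<beta> * \<gamma> * m1)"
  have X0: "X \<ge> 0" "Y \<ge> 0" using pos A0 unfolding X_def Y_def by auto
  have "N\<^sup>2 \<le> X + Y"
    using main pos unfolding X_def Y_def by (simp add: field_simps)
  then have "N \<le> sqrt (X + Y)" using N by (simp add: real_le_rsqrt)
  also have "\<dots> \<le> sqrt X + sqrt Y" using X0 by (rule sqrt_add_le_add_sqrt)
  also have "sqrt X = sqrt (A0 / m1) * exp (- \<gamma> * t / 2)"
    unfolding X_def real_sqrt_mult sqrt_exp by (rule mult.commute)
  also have "\<dots> \<le> sqrt (A0 / m1) * exp (- \<alpha> * t)"
  proof (rule mult_left_mono)
    have "\<alpha> * t \<le> (\<gamma> / 2) * t" using al t by (intro mult_right_mono) auto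
    then have "- \<gamma> * t / 2 \<le> - \<alpha> * t" by simp
    then show "exp (- \<gamma> * t / 2) \<le> exp (- \<alpha> * t)" by simp
  qed (use pos A0 in simp)
  also have "sqrt Y = D1 / sqrt (\<beta> * \<gamma> * m1)"
    unfolding Y_def using D by (simp add: real_sqrt_divide)
  also have "\<dots> \<le> 1 / (\<alpha> * L) * D"
  proof -
    have sq: "sqrt (\<beta> * \<gamma> * m1) > 0" using pos by simp
    have "0 \<le> \<kappa> * D" using D by linarith
    then have D0: "D \<ge> 0" using pos by (simp add: zero_le_mult_iff)
    have "\<alpha> * (\<kappa> * L) \<le> sqrt (\<beta> * \<gamma> * m1)"
      using al(2) pos by (simp add: le_divide_eq)
    then have "\<kappa> * D * (\<alpha> * L) \<le> D * sqrt (\<beta> * \<gamma> * m1)"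
      using D0 by (metis mult.commute mult.left_commute mult_left_mono)
    then have "\<kappa> * D / sqrt (\<beta> * \<gamma> * m1) \<le> D / (\<alpha> * L)"
      using sq pos by (simp add: divide_simps)
    moreover have "D1 / sqrt (\<beta> * \<gamma> * m1) \<le> \<kappa> * D / sqrt (\<beta> * \<gamma> * m1)"
      using D sq by (simp add: divide_right_mono)
    ultimately show ?thesis by simp
  qed
  finally show ?thesis by simp
qed

lemma norm_sq_matrix: "(norm (A::real^'n^'m))\<^sup>2 = (\<Sum>i\<in>UNIV. \<Sum>j\<in>UNIV. (A $ i $ j)\<^sup>2)"
  by (simp add: norm_vec_def L2_set_def sum_nonneg)

lemma norm_transpose: "norm (transpose (A::real^'n^'m)) = norm A"
proof -
  have "(norm (transpose A))\<^sup>2 = (norm A)\<^sup>2"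
    unfolding norm_sq_matrix transpose_def by (simp, subst sum.swap, simp)
  then show ?thesis by (simp add: power2_eq_iff_nonneg)
qed

lemma Rinv_nonneg:
  assumes R: "\<forall>x. x \<noteq> 0 \<longrightarrow> x \<bullet> ((R::real^'n^'n) *v x) > 0"
  shows "y \<bullet> (matrix_inv R *v y) \<ge> 0"
proof -
  have I: "R ** matrix_inv R = mat 1" using matrix_inv_works pd_invertible[OF R] by blast
  define z where "z = matrix_inv R *v y"
  have y: "y = R *v z" unfolding z_def by (simp add: matrix_vector_mul_assoc I)
  have "z \<bullet> (R *v z) \<ge> 0" using R by (cases "z = 0") (auto intro: less_imp_le)
  then show ?thesis unfolding z_def[symmetric] using y by (simp add: inner_commute)
qed

lemma mv_scaleR_left: "(r *\<^sub>R (A::real^'n^'m)) *v x = r *\<^sub>R (A *v x)"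
  by (simp add: vec_eq_iff matrix_vector_mult_def sum_distrib_left algebra_simps)

lemma mv_neg_left: "(- (A::real^'n^'m)) *v x = - (A *v x)"
  by (simp add: vec_eq_iff matrix_vector_mult_def sum_negf)

lemma pointwise_identity:
  fixes M M' C K :: "real^'n^'n" and P Pi Q Pd :: "real^'h^'h" and \<phi> :: "real^'h^'n"
    and Ri :: "real^'n^'n" and s s' d \<epsilon> :: "real^'n" and u u' a a' :: "real^'h" and lam :: real
  assumes Msym: "transpose M = M" and Psym: "transpose P = P"
    and skew: "transpose (M' - 2 *\<^sub>R C) = - (M' - 2 *\<^sub>R C)"
    and eq1: "M *v s' + (C + K) *v s + \<phi> *v u = d"
    and eq2: "P *v u' - transpose \<phi> *v s + (transpose \<phi> ** Ri ** \<phi> + lam *\<^sub>R P) *v u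
              = transpose \<phi> *v (Ri *v \<epsilon>) - P *v (lam *\<^sub>R a) - P *v a'"
    and Pd: "Pd = P ** ((2 * lam) *\<^sub>R Pi - Q + Pi ** transpose \<phi> ** Ri ** \<phi> ** Pi) ** P"
    and PPi: "\<And>y. P *v (Pi *v y) = y" and PiP: "\<And>y. Pi *v (P *v y) = y"
  shows "s \<bullet> (M *v s' + M' *v s) + s' \<bullet> (M *v s) + (u \<bullet> (P *v u' + Pd *v u) + u' \<bullet> (P *v u))
     = 2 * (s \<bullet> d) - 2 * (s \<bullet> (K *v s)) + 2 * (u \<bullet> (transpose \<phi> *v (Ri *v \<epsilon>)))
       - 2 * (u \<bullet> (P *v (lam *\<^sub>R a + a'))) - (\<phi> *v u) \<bullet> (Ri *v (\<phi> *v u))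
       - (P *v u) \<bullet> (Q *v (P *v u))"
proof -
  have a1: "s' \<bullet> (M *v s) = s \<bullet> (M *v s')" using inner_sym[OF Msym] by blast
  have a2: "u' \<bullet> (P *v u) = u \<bullet> (P *v u')" using inner_sym[OF Psym] by blast
  have a3: "s \<bullet> (M' *v s) = 2 * (s \<bullet> (C *v s))"
  proof -
    define B where "B = M' - 2 *\<^sub>R C"
    have "s \<bullet> (B *v s) = (transpose B *v s) \<bullet> s" by (rule inner_transpose)
    also have "\<dots> = - (s \<bullet> (B *v s))" using skew unfolding B_def[symmetric]
      by (simp add: inner_commute mv_neg_left)
    finally have "s \<bullet> (B *v s) = 0" by simp
    then show ?thesis unfolding B_def
      by (simp add: matrix_vector_mult_diff_rdistrib mv_scaleR_left inner_diff_right)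
  qed
  have a4: "M *v s' = d - C *v s - K *v s - \<phi> *v u"
    using eq1 by (simp add: matrix_vector_mult_add_rdistrib algebra_simps)
  have a5: "P *v u' = transpose \<phi> *v s - transpose \<phi> *v (Ri *v (\<phi> *v u)) - lam *\<^sub>R (P *v u)
        + transpose \<phi> *v (Ri *v \<epsilon>) - P *v (lam *\<^sub>R a) - P *v a'"
    using eq2 by (simp add: matrix_vector_mult_add_rdistrib mv_scaleR_left matrix_vector_mul_assoc[symmetric] algebra_simps)
  have a6: "Pd *v u = (2 * lam) *\<^sub>R (P *v u) - P *v (Q *v (P *v u)) + transpose \<phi> *v (Ri *v (\<phi> *v u))"
    unfolding Pd
    by (simp add: matrix_vector_mul_assoc[symmetric] matrix_vector_mult_add_rdistrib
        matrix_vector_mult_diff_rdistrib mv_scaleR_left matrix_vector_right_distrib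
        matrix_vector_mult_diff_distrib matrix_vector_mult_scaleR PPi PiP)
  have i1: "u \<bullet> (transpose \<phi> *v s) = s \<bullet> (\<phi> *v u)"
    using inner_transpose[of u "transpose \<phi>" s] by (simp only: transpose_transpose inner_commute)
  have i2: "u \<bullet> (transpose \<phi> *v (Ri *v (\<phi> *v u))) = (\<phi> *v u) \<bullet> (Ri *v (\<phi> *v u))"
    using inner_transpose[of u "transpose \<phi>" "Ri *v (\<phi> *v u)"] by (simp only: transpose_transpose)
  have i3: "u \<bullet> (P *v (Q *v (P *v u))) = (P *v u) \<bullet> (Q *v (P *v u))"
    using inner_transpose[of u P "Q *v (P *v u)"] by (simp only: Psym)
  have i4: "u \<bullet> (P *v (lam *\<^sub>R a)) + u \<bullet> (P *v a') = u \<bullet> (P *v (lam *\<^sub>R a + a'))"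
    by (simp add: matrix_vector_right_distrib inner_add_right)
  have b1: "s \<bullet> (M *v s') = s \<bullet> d - s \<bullet> (C *v s) - s \<bullet> (K *v s) - s \<bullet> (\<phi> *v u)"
    unfolding a4 by (simp add: inner_diff_right)
  have b2: "u \<bullet> (P *v u') = s \<bullet> (\<phi> *v u) - (\<phi> *v u) \<bullet> (Ri *v (\<phi> *v u)) - lam * (u \<bullet> (P *v u))
      + u \<bullet> (transpose \<phi> *v (Ri *v \<epsilon>)) - u \<bullet> (P *v (lam *\<^sub>R a)) - u \<bullet> (P *v a')"
    unfolding a5 by (simp add: inner_diff_right inner_add_right i1 i2 del: transpose_matrix_vector)
  have b3: "u \<bullet> (Pd *v u) = 2 * lam * (u \<bullet> (P *v u)) - (P *v u) \<bullet> (Q *v (P *v u)) + (\<phi> *v u) \<bullet> (Ri *v (\<phi> *v u))"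
    unfolding a6 by (simp add: inner_diff_right inner_add_right i2 i3 del: transpose_matrix_vector)
  have ex: "s \<bullet> (M *v s' + M' *v s) + s' \<bullet> (M *v s) + (u \<bullet> (P *v u' + Pd *v u) + u' \<bullet> (P *v u))
     = s \<bullet> (M *v s') + s \<bullet> (M' *v s) + s' \<bullet> (M *v s) + u \<bullet> (P *v u') + u \<bullet> (Pd *v u) + u' \<bullet> (P *v u)"
    by (simp add: inner_add_right)
  show ?thesis unfolding ex using a1 a2 a3 b1 b2 b3 i4 by linarith
qed

lemma real_bound:
  fixes V ns nu N cK c2 sd E D1 \<beta> :: real
  assumes V: "V \<le> - 2 * cK * ns\<^sup>2 - c2 * nu\<^sup>2 + 2 * ns * sd + 2 * nu * E"
    and nn: "ns \<ge> 0" "nu \<ge> 0" "sd \<ge> 0" "E \<ge> 0" "N \<ge> 0"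
    and N: "N\<^sup>2 = ns\<^sup>2 + nu\<^sup>2"
    and b: "\<beta> > 0" "\<beta> \<le> cK" "2 * \<beta> \<le> c2"
  shows "V \<le> - \<beta> * N\<^sup>2 + (sd + E)\<^sup>2 / \<beta>"
proof -
  have "ns\<^sup>2 \<le> N\<^sup>2" "nu\<^sup>2 \<le> N\<^sup>2" using N by auto
  then have ns: "ns \<le> N" and nu: "nu \<le> N" using nn by (auto simp: power2_le_iff_abs_le)
  have "2 * ns * sd + 2 * nu * E \<le> 2 * N * sd + 2 * N * E"
    using ns nu nn by (intro add_mono mult_right_mono) auto
  moreover have "- 2 * cK * ns\<^sup>2 \<le> - 2 * \<beta> * ns\<^sup>2" using b by (simp add: mult_right_mono)
  moreover have "- c2 * nu\<^sup>2 \<le> - 2 * \<beta> * nu\<^sup>2" using b by (simp add: mult_right_mono)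
  ultimately have V2: "V \<le> - 2 * \<beta> * N\<^sup>2 + 2 * N * (sd + E)" using V N by (simp add: algebra_simps)
  have "0 \<le> (\<beta> * N - (sd + E))\<^sup>2" by simp
  then have "2 * \<beta> * N * (sd + E) \<le> \<beta>\<^sup>2 * N\<^sup>2 + (sd + E)\<^sup>2"
    by (simp add: power2_eq_square algebra_simps)
  then have "2 * N * (sd + E) \<le> \<beta> * N\<^sup>2 + (sd + E)\<^sup>2 / \<beta>"
    using b by (simp add: field_simps power2_eq_square)
  then show ?thesis using V2 by simp
qed


lemma sup_norm_ge:
  assumes "unif_bdd f" "t \<ge> 0"
  shows "norm (f t) \<le> sup_norm f"
proof -
  obtain B where B: "\<forall>t\<ge>0. norm (f t) \<le> B" using assms(1) unfolding unif_bdd_def by auto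
  have "bdd_above ((\<lambda>t. norm (f t)) ` {0..})" using B by (auto intro!: bdd_aboveI2)
  then show ?thesis unfolding sup_norm_def using assms(2) by (auto intro!: cSup_upper)
qed

theorem theorem3:
  fixes M M' K :: "real \<Rightarrow> real^'n^'n"
    and Q Pinv :: "real \<Rightarrow> real^'h^'h"
    and \<phi> :: "real \<Rightarrow> real^'h^'n"
    and R :: "real^'n^'n"
    and lam :: real
  assumes M_sym: "\<forall>t\<ge>0. transpose (M t) = M t"
    and M_pd: "unif_pd M" and M_bdd: "unif_bdd M"
    and M_deriv: "\<forall>t\<ge>0. (M has_vector_derivative M' t) (at t within {0..})"
    and K_pd: "unif_pd K" and K_bdd: "unif_bdd K"
    and Q_pd: "unif_pd Q"
    and R_pd: "\<forall>x. x \<noteq> 0 \<longrightarrow> x \<bullet> (R *v x) > 0"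
    and phi_bdd: "unif_bdd \<phi>"
    and lam_nonneg: "lam \<ge> 0"
    and Pinv_sym: "\<forall>t\<ge>0. transpose (Pinv t) = Pinv t"
    and Pinv_pd: "unif_pd Pinv" and Pinv_bdd: "unif_bdd Pinv"
    and Pinv_deriv: "\<forall>t\<ge>0. (Pinv has_vector_derivative
          (Pinv t ** ((2 * lam) *\<^sub>R matrix_inv (Pinv t) - Q t
             + matrix_inv (Pinv t) ** transpose (\<phi> t) ** matrix_inv R ** \<phi> t ** matrix_inv (Pinv t))
           ** Pinv t)) (at t within {0..})"
  shows "\<exists>\<alpha>>0. \<forall>(C :: real \<Rightarrow> real^'n^'n) (s :: real \<Rightarrow> real^'n) s' (atil :: real \<Rightarrow> real^'h) atil'
                   (d :: real \<Rightarrow> real^'n) (\<epsilon> :: real \<Rightarrow> real^'n) (a :: real \<Rightarrow> real^'h) a'.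
      (\<forall>t\<ge>0. transpose (M' t - 2 *\<^sub>R C t) = - (M' t - 2 *\<^sub>R C t))
    \<and> (\<forall>t\<ge>0. (s has_vector_derivative s' t) (at t within {0..}))
    \<and> (\<forall>t\<ge>0. (atil has_vector_derivative atil' t) (at t within {0..}))
    \<and> (\<forall>t\<ge>0. (a has_vector_derivative a' t) (at t within {0..}))
    \<and> unif_bdd d \<and> unif_bdd \<epsilon>
    \<and> unif_bdd (\<lambda>t. lam *\<^sub>R a t + a' t)
    \<and> (\<forall>t\<ge>0. M t *v s' t + (C t + K t) *v s t + \<phi> t *v atil t = d t)
    \<and> (\<forall>t\<ge>0. Pinv t *v atil' t - transpose (\<phi> t) *v s t
              + (transpose (\<phi> t) ** matrix_inv R ** \<phi> t + lam *\<^sub>R Pinv t) *v atil t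
            = transpose (\<phi> t) *v (matrix_inv R *v \<epsilon> t)
              - Pinv t *v (lam *\<^sub>R a t) - Pinv t *v a' t)
    \<longrightarrow> (\<exists>c. \<forall>t\<ge>0. norm (stack (s t) (atil t)) \<le> c * exp (- \<alpha> * t)
          + (1 / (\<alpha> * lam_min_all (\<lambda>t. block_diag (M t) (Pinv t))))
            * (sup_norm d + sup_norm (\<lambda>t. transpose (\<phi> t) *v (matrix_inv R *v \<epsilon> t))
               + lam_max_all Pinv * sup_norm (\<lambda>t. lam *\<^sub>R a t + a' t)))"

proof -
  obtain cM where cM: "cM > 0" "\<forall>t\<ge>0. \<forall>x. cM * (norm x)\<^sup>2 \<le> x \<bullet> (M t *v x)"
    using M_pd unfolding unif_pd_def by auto
  obtain cK where cK: "cK > 0" "\<forall>t\<ge>0. \<forall>x. cK * (norm x)\<^sup>2 \<le> x \<bullet> (K t *v x)"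
    using K_pd unfolding unif_pd_def by auto
  obtain cQ where cQ: "cQ > 0" "\<forall>t\<ge>0. \<forall>x. cQ * (norm x)\<^sup>2 \<le> x \<bullet> (Q t *v x)"
    using Q_pd unfolding unif_pd_def by auto
  obtain cP where cP: "cP > 0" "\<forall>t\<ge>0. \<forall>x. cP * (norm x)\<^sup>2 \<le> x \<bullet> (Pinv t *v x)"
    using Pinv_pd unfolding unif_pd_def by auto
  obtain Mb where Mb: "\<forall>t\<ge>0. norm (M t) \<le> Mb" using M_bdd unfolding unif_bdd_def by auto
  obtain Pb where Pb: "\<forall>t\<ge>0. norm (Pinv t) \<le> Pb" using Pinv_bdd unfolding unif_bdd_def by auto
  obtain phib where phib: "\<forall>t\<ge>0. norm (\<phi> t) \<le> phib" using phi_bdd unfolding unif_bdd_def by auto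
  have Mb0: "Mb \<ge> 0" using Mb norm_ge_zero by (meson order_trans order_refl)
  have Pb0: "Pb \<ge> 0" using Pb norm_ge_zero by (meson order_trans order_refl)
  have phib0: "phib \<ge> 0" using phib norm_ge_zero by (meson order_trans order_refl)
  have Pinv_inv: "Pinv t ** matrix_inv (Pinv t) = mat 1 \<and> matrix_inv (Pinv t) ** Pinv t = mat 1"
    if "t \<ge> 0" for t
    using matrix_inv_works pd_invertible unif_pd_pos[OF Pinv_pd that] by blast
  have PPi: "Pinv t *v (matrix_inv (Pinv t) *v y) = y" if "t \<ge> 0" for t y
    using Pinv_inv[OF that] by (simp add: matrix_vector_mul_assoc)
  have PiP: "matrix_inv (Pinv t) *v (Pinv t *v y) = y" if "t \<ge> 0" for t y
    using Pinv_inv[OF that] by (simp add: matrix_vector_mul_assoc)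
  define L where "L = lam_min_all (\<lambda>t. block_diag (M t) (Pinv t))"
  define m1 where "m1 = min cM cP"
  have m1pos: "m1 > 0" unfolding m1_def using cM cP by simp
  have blk_pd: "m1 * (norm z)\<^sup>2 \<le> z \<bullet> (block_diag (M t) (Pinv t) *v z)" if t: "t \<ge> 0" for t z
  proof -
    obtain u v where z: "z = stack u v" using stack_surj by blast
    have "m1 * (norm z)\<^sup>2 = m1 * (norm u)\<^sup>2 + m1 * (norm v)\<^sup>2"
      by (simp add: z norm_stack_sq algebra_simps)
    also have "\<dots> \<le> cM * (norm u)\<^sup>2 + cP * (norm v)\<^sup>2"
      by (intro add_mono mult_right_mono) (auto simp: m1_def)
    also have "\<dots> \<le> u \<bullet> (M t *v u) + v \<bullet> (Pinv t *v v)"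
      using cM cP t by (intro add_mono) auto
    also have "\<dots> = z \<bullet> (block_diag (M t) (Pinv t) *v z)"
      by (simp add: z block_stack inner_stack)
    finally show ?thesis .
  qed
  have blk_sym: "transpose (block_diag (M t) (Pinv t)) = block_diag (M t) (Pinv t)" if "t \<ge> 0" for t
    using M_sym Pinv_sym that by (simp add: transpose_block)
  have Lge: "L \<ge> m1"
    unfolding L_def lam_min_all_def
  proof (rule cInf_greatest)
    show "(\<lambda>t. lam_min (block_diag (M t) (Pinv t))) ` {0..} \<noteq> {}" by auto
  next
    fix y assume "y \<in> (\<lambda>t. lam_min (block_diag (M t) (Pinv t))) ` {0..}"
    then obtain t where t: "t \<ge> 0" "y = lam_min (block_diag (M t) (Pinv t))" by auto
    show "m1 \<le> y" unfolding t(2)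
      using eig_lower[OF lam_in(1)[OF blk_sym[OF t(1)]]] blk_pd[OF t(1)] by blast
  qed
  have Lpos: "L > 0" using Lge m1pos by linarith
  define Lmax where "Lmax = lam_max_all Pinv"
  have Lmax_ge: "Lmax \<ge> cP"
  proof -
    have bdd: "bdd_above ((\<lambda>t. lam_max (Pinv t)) ` {0..})"
    proof (rule bdd_aboveI2)
      fix t :: real assume "t \<in> {0..}"
      then have t: "t \<ge> 0" by simp
      have "lam_max (Pinv t) \<le> norm (Pinv t)"
        using eig_upper[OF lam_in(2)[OF Pinv_sym[rule_format, OF t]]] .
      then show "lam_max (Pinv t) \<le> Pb" using Pb t by force
    qed
    have "cP \<le> lam_max (Pinv 0)"
      using eig_lower[OF lam_in(2)[OF Pinv_sym[rule_format, of 0]]] cP by auto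
    also have "\<dots> \<le> Lmax" unfolding Lmax_def lam_max_all_def
      using bdd by (intro cSup_upper) auto
    finally show ?thesis .
  qed
  have Lmax_pos: "Lmax > 0" using Lmax_ge cP by linarith
  define \<beta> where "\<beta> = min cK (cQ * cP\<^sup>2 / 2)"
  define m2 where "m2 = Mb + Pb + 1"
  define \<gamma> where "\<gamma> = \<beta> / m2"
  define \<kappa> where "\<kappa> = 1 + Pb / Lmax"
  define \<alpha> where "\<alpha> = min (\<gamma> / 2) (sqrt (\<beta> * \<gamma> * m1) / (\<kappa> * L))"
  have bpos: "\<beta> > 0" unfolding \<beta>_def using cK cQ cP by simp
  have m2pos: "m2 > 0" unfolding m2_def using Mb0 Pb0 by simp
  have gpos: "\<gamma> > 0" unfolding \<gamma>_def using bpos m2pos by simp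
  have kge: "\<kappa> \<ge> 1" unfolding \<kappa>_def using Pb0 Lmax_pos by simp
  have al1: "\<alpha> \<le> \<gamma> / 2" and al2: "\<alpha> \<le> sqrt (\<beta> * \<gamma> * m1) / (\<kappa> * L)"
    unfolding \<alpha>_def by (rule min.cobounded1, rule min.cobounded2)
  have apos: "\<alpha> > 0" unfolding \<alpha>_def using gpos bpos m1pos kge Lpos by simp
  show ?thesis
  proof (rule exI[of _ \<alpha>], intro conjI allI impI)
    show "\<alpha> > 0" by (rule apos)
  next
    fix C :: "real \<Rightarrow> real^'n^'n" and s :: "real \<Rightarrow> real^'n" and s' and atil :: "real \<Rightarrow> real^'h" and atil'
      and d :: "real \<Rightarrow> real^'n" and \<epsilon> :: "real \<Rightarrow> real^'n" and a :: "real \<Rightarrow> real^'h" and a'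
    assume H: "(\<forall>t\<ge>0. transpose (M' t - 2 *\<^sub>R C t) = - (M' t - 2 *\<^sub>R C t))
    \<and> (\<forall>t\<ge>0. (s has_vector_derivative s' t) (at t within {0..}))
    \<and> (\<forall>t\<ge>0. (atil has_vector_derivative atil' t) (at t within {0..}))
    \<and> (\<forall>t\<ge>0. (a has_vector_derivative a' t) (at t within {0..}))
    \<and> unif_bdd d \<and> unif_bdd \<epsilon>
    \<and> unif_bdd (\<lambda>t. lam *\<^sub>R a t + a' t)
    \<and> (\<forall>t\<ge>0. M t *v s' t + (C t + K t) *v s t + \<phi> t *v atil t = d t)
    \<and> (\<forall>t\<ge>0. Pinv t *v atil' t - transpose (\<phi> t) *v s t
              + (transpose (\<phi> t) ** matrix_inv R ** \<phi> t + lam *\<^sub>R Pinv t) *v atil t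
            = transpose (\<phi> t) *v (matrix_inv R *v \<epsilon> t)
              - Pinv t *v (lam *\<^sub>R a t) - Pinv t *v a' t)"
    have skew: "\<forall>t\<ge>0. transpose (M' t - 2 *\<^sub>R C t) = - (M' t - 2 *\<^sub>R C t)" using H by blast
    have sder: "\<forall>t\<ge>0. (s has_vector_derivative s' t) (at t within {0..})" using H by blast
    have ader: "\<forall>t\<ge>0. (atil has_vector_derivative atil' t) (at t within {0..})" using H by blast
    have dbdd: "unif_bdd d" and ebdd: "unif_bdd \<epsilon>" and wbdd: "unif_bdd (\<lambda>t. lam *\<^sub>R a t + a' t)"
      using H by blast+
    have eq1: "\<forall>t\<ge>0. M t *v s' t + (C t + K t) *v s t + \<phi> t *v atil t = d t" using H by blast
    have eq2: "\<forall>t\<ge>0. Pinv t *v atil' t - transpose (\<phi> t) *v s t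
              + (transpose (\<phi> t) ** matrix_inv R ** \<phi> t + lam *\<^sub>R Pinv t) *v atil t
            = transpose (\<phi> t) *v (matrix_inv R *v \<epsilon> t)
              - Pinv t *v (lam *\<^sub>R a t) - Pinv t *v a' t" using H by blast
    define e where "e = (\<lambda>t. transpose (\<phi> t) *v (matrix_inv R *v \<epsilon> t))"
    define w where "w = (\<lambda>t. lam *\<^sub>R a t + a' t)"
    have e_bdd: "unif_bdd e"
    proof -
      obtain eb where eb: "\<forall>t\<ge>0. norm (\<epsilon> t) \<le> eb" using ebdd unfolding unif_bdd_def by auto
      have "norm (e t) \<le> phib * (norm (matrix_inv R) * eb)" if t: "t \<ge> 0" for t
      proof -
        have "norm (e t) \<le> norm (transpose (\<phi> t)) * norm (matrix_inv R *v \<epsilon> t)"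
          unfolding e_def by (rule norm_mv_le)
        also have "\<dots> \<le> phib * (norm (matrix_inv R) * eb)"
        proof (rule mult_mono)
          show "norm (transpose (\<phi> t)) \<le> phib" using phib t by (simp add: norm_transpose)
          show "norm (matrix_inv R *v \<epsilon> t) \<le> norm (matrix_inv R) * eb"
            using norm_mv_le[of "matrix_inv R" "\<epsilon> t"] eb t
            by (meson mult_left_mono norm_ge_zero order_trans)
        qed (auto simp: phib0)
        finally show ?thesis .
      qed
      then show ?thesis unfolding unif_bdd_def by blast
    qed
    define sd where "sd = sup_norm d"
    define se where "se = sup_norm e"
    define sw where "sw = sup_norm w"
    have dle: "norm (d t) \<le> sd" if "t \<ge> 0" for t using sup_norm_ge[OF dbdd that] sd_def by simp
    have ele: "norm (e t) \<le> se" if "t \<ge> 0" for t using sup_norm_ge[OF e_bdd that] se_def by simp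
    have wle: "norm (w t) \<le> sw" if "t \<ge> 0" for t using sup_norm_ge[OF wbdd that] sw_def w_def by simp
    have sd0: "sd \<ge> 0" using dle[of 0] norm_ge_zero by (meson order_trans order_refl)
    have se0: "se \<ge> 0" using ele[of 0] norm_ge_zero by (meson order_trans order_refl)
    have sw0: "sw \<ge> 0" using wle[of 0] norm_ge_zero by (meson order_trans order_refl)
    define D1 where "D1 = sd + (se + Pb * sw)"
    define Pd where "Pd = (\<lambda>t. Pinv t ** ((2 * lam) *\<^sub>R matrix_inv (Pinv t) - Q t
             + matrix_inv (Pinv t) ** transpose (\<phi> t) ** matrix_inv R ** \<phi> t ** matrix_inv (Pinv t))
           ** Pinv t)"
    define N where "N = (\<lambda>t. norm (stack (s t) (atil t)))"
    define W where "W = (\<lambda>t. s t \<bullet> (M t *v s t) + atil t \<bullet> (Pinv t *v atil t))"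
    define W' where "W' = (\<lambda>t. s t \<bullet> (M t *v s' t + M' t *v s t) + s' t \<bullet> (M t *v s t)
        + (atil t \<bullet> (Pinv t *v atil' t + Pd t *v atil t) + atil' t \<bullet> (Pinv t *v atil t)))"
    have Wder: "\<forall>t\<ge>0. (W has_real_derivative W' t) (at t within {0..})"
    proof (intro allI impI)
      fix t :: real assume t: "t \<ge> 0"
      have h1: "((\<lambda>x. M x *v s x) has_vector_derivative (M t *v s' t + M' t *v s t)) (at t within {0..})"
        using bounded_bilinear.has_vector_derivative[OF bb_mv M_deriv[rule_format, OF t] sder[rule_format, OF t]]
        by simp
      have h2: "((\<lambda>x. s x \<bullet> (M x *v s x)) has_vector_derivative
          (s t \<bullet> (M t *v s' t + M' t *v s t) + s' t \<bullet> (M t *v s t))) (at t within {0..})"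
        using bounded_bilinear.has_vector_derivative[OF bounded_bilinear_inner sder[rule_format, OF t] h1]
        by simp
      have h3: "((\<lambda>x. Pinv x *v atil x) has_vector_derivative (Pinv t *v atil' t + Pd t *v atil t)) (at t within {0..})"
        using bounded_bilinear.has_vector_derivative[OF bb_mv Pinv_deriv[rule_format, OF t] ader[rule_format, OF t]]
        unfolding Pd_def by simp
      have h4: "((\<lambda>x. atil x \<bullet> (Pinv x *v atil x)) has_vector_derivative
          (atil t \<bullet> (Pinv t *v atil' t + Pd t *v atil t) + atil' t \<bullet> (Pinv t *v atil t))) (at t within {0..})"
        using bounded_bilinear.has_vector_derivative[OF bounded_bilinear_inner ader[rule_format, OF t] h3]
        by simp
      show "(W has_real_derivative W' t) (at t within {0..})"
        unfolding has_real_derivative_iff_has_vector_derivative W_def W'_def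
        using has_vector_derivative_add[OF h2 h4] by simp
    qed
    have Wineq: "\<forall>t\<ge>0. W' t \<le> - \<gamma> * W t + D1\<^sup>2 / \<beta>"
    proof (intro allI impI)
      fix t :: real assume t: "t \<ge> 0"
      define u where "u = atil t"
      have ident: "W' t = 2 * (s t \<bullet> d t) - 2 * (s t \<bullet> (K t *v s t)) + 2 * (u \<bullet> e t)
       - 2 * (u \<bullet> (Pinv t *v w t)) - (\<phi> t *v u) \<bullet> (matrix_inv R *v (\<phi> t *v u))
       - (Pinv t *v u) \<bullet> (Q t *v (Pinv t *v u))"
        unfolding W'_def u_def e_def w_def
        by (rule pointwise_identity[OF M_sym[rule_format, OF t] Pinv_sym[rule_format, OF t]
              skew[rule_format, OF t] eq1[rule_format, OF t] eq2[rule_format, OF t] _ PPi[OF t] PiP[OF t]])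
           (simp add: Pd_def)
      have k1: "cK * (norm (s t))\<^sup>2 \<le> s t \<bullet> (K t *v s t)" using cK t by blast
      have k2: "0 \<le> (\<phi> t *v u) \<bullet> (matrix_inv R *v (\<phi> t *v u))" using Rinv_nonneg[OF R_pd] .
      have k3: "cQ * (norm (Pinv t *v u))\<^sup>2 \<le> (Pinv t *v u) \<bullet> (Q t *v (Pinv t *v u))" using cQ t by blast
      have k4: "cP * norm u \<le> norm (Pinv t *v u)"
      proof (cases "u = 0")
        case True then show ?thesis by simp
      next
        case False
        have "cP * (norm u)\<^sup>2 \<le> u \<bullet> (Pinv t *v u)" using cP t by blast
        also have "\<dots> \<le> norm u * norm (Pinv t *v u)" by (rule norm_cauchy_schwarz)
        finally have "norm u * (cP * norm u) \<le> norm u * norm (Pinv t *v u)"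
          by (simp add: power2_eq_square algebra_simps)
        then show ?thesis using False by simp
      qed
      have k5: "cQ * cP\<^sup>2 * (norm u)\<^sup>2 \<le> (Pinv t *v u) \<bullet> (Q t *v (Pinv t *v u))"
      proof -
        have "(cP * norm u)\<^sup>2 \<le> (norm (Pinv t *v u))\<^sup>2"
          using k4 cP by (intro power_mono) auto
        then have "cQ * (cP * norm u)\<^sup>2 \<le> cQ * (norm (Pinv t *v u))\<^sup>2"
          using cQ by (intro mult_left_mono) auto
        then show ?thesis using k3 by (simp add: power_mult_distrib algebra_simps)
      qed
      have k6: "s t \<bullet> d t \<le> norm (s t) * sd"
        using norm_cauchy_schwarz[of "s t" "d t"] dle[OF t]
        by (meson mult_left_mono norm_ge_zero order_trans)
      have k7: "u \<bullet> e t \<le> norm u * se"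
        using norm_cauchy_schwarz[of u "e t"] ele[OF t]
        by (meson mult_left_mono norm_ge_zero order_trans)
      have k8: "- (u \<bullet> (Pinv t *v w t)) \<le> norm u * (Pb * sw)"
      proof -
        have "- (u \<bullet> (Pinv t *v w t)) \<le> norm u * norm (Pinv t *v w t)"
          using norm_cauchy_schwarz[of "- u" "Pinv t *v w t"] by simp
        also have "norm (Pinv t *v w t) \<le> Pb * sw"
          using norm_mv_le[of "Pinv t" "w t"] Pb t wle[OF t] Pb0
          by (meson mult_mono norm_ge_zero order_trans)
        then have "norm u * norm (Pinv t *v w t) \<le> norm u * (Pb * sw)"
          by (simp add: mult_left_mono)
        finally show ?thesis .
      qed
      have V: "W' t \<le> - 2 * cK * (norm (s t))\<^sup>2 - (cQ * cP\<^sup>2) * (norm u)\<^sup>2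
                 + 2 * norm (s t) * sd + 2 * norm u * (se + Pb * sw)"
        unfolding ident using k1 k2 k5 k6 k7 k8 by (simp add: algebra_simps)
      have N2: "(N t)\<^sup>2 = (norm (s t))\<^sup>2 + (norm u)\<^sup>2" unfolding N_def u_def by (rule norm_stack_sq)
      have Wb: "W' t \<le> - \<beta> * (N t)\<^sup>2 + D1\<^sup>2 / \<beta>"
        unfolding D1_def
        by (rule real_bound[OF V _ _ sd0 _ _ N2 bpos]) (auto simp: N_def \<beta>_def se0 sw0 Pb0)
      have Wup: "W t \<le> m2 * (N t)\<^sup>2"
      proof -
        have "s t \<bullet> (M t *v s t) \<le> norm (s t) * norm (M t *v s t)" by (rule norm_cauchy_schwarz)
        also have "\<dots> \<le> norm (s t) * (Mb * norm (s t))"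
          using norm_mv_le[of "M t" "s t"] mult_right_mono[OF Mb[rule_format, OF t] norm_ge_zero[of "s t"]]
          by (intro mult_left_mono) auto
        finally have w1: "s t \<bullet> (M t *v s t) \<le> Mb * (norm (s t))\<^sup>2" by (simp add: power2_eq_square algebra_simps)
        have "u \<bullet> (Pinv t *v u) \<le> norm u * norm (Pinv t *v u)" by (rule norm_cauchy_schwarz)
        also have "\<dots> \<le> norm u * (Pb * norm u)"
          using norm_mv_le[of "Pinv t" u] mult_right_mono[OF Pb[rule_format, OF t] norm_ge_zero[of u]]
          by (intro mult_left_mono) auto
        finally have w2: "u \<bullet> (Pinv t *v u) \<le> Pb * (norm u)\<^sup>2" by (simp add: power2_eq_square algebra_simps)
        have "Mb * (norm (s t))\<^sup>2 + Pb * (norm u)\<^sup>2 \<le> m2 * ((norm (s t))\<^sup>2 + (norm u)\<^sup>2)"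
          unfolding m2_def using Mb0 Pb0 by (simp add: algebra_simps add_mono)
        then show ?thesis using w1 w2 N2 unfolding W_def u_def by simp
      qed
      have "- \<beta> * (N t)\<^sup>2 \<le> - \<gamma> * W t"
      proof -
        have "\<gamma> * W t \<le> \<gamma> * (m2 * (N t)\<^sup>2)" using Wup gpos by (simp add: mult_left_mono)
        also have "\<dots> = \<beta> * (N t)\<^sup>2" unfolding \<gamma>_def using m2pos by simp
        finally show ?thesis by simp
      qed
      then show "W' t \<le> - \<gamma> * W t + D1\<^sup>2 / \<beta>" using Wb by simp
    qed
    have Wlow: "m1 * (N t)\<^sup>2 \<le> W t" if "t \<ge> 0" for t
    proof -
      have "m1 * (N t)\<^sup>2 \<le> stack (s t) (atil t) \<bullet> (block_diag (M t) (Pinv t) *v stack (s t) (atil t))"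
        unfolding N_def by (rule blk_pd[OF that])
      then show ?thesis unfolding W_def by (simp add: block_stack inner_stack)
    qed
    show "\<exists>c. \<forall>t\<ge>0. norm (stack (s t) (atil t)) \<le> c * exp (- \<alpha> * t)
          + (1 / (\<alpha> * lam_min_all (\<lambda>t. block_diag (M t) (Pinv t))))
            * (sup_norm d + sup_norm (\<lambda>t. transpose (\<phi> t) *v (matrix_inv R *v \<epsilon> t))
               + lam_max_all Pinv * sup_norm (\<lambda>t. lam *\<^sub>R a t + a' t))"
    proof (rule exI[of _ "sqrt (\<bar>W 0\<bar> / m1)"], intro allI impI)
      fix t :: real assume t: "t \<ge> 0"
      have cmp: "W t \<le> exp (- \<gamma> * t) * (W 0 - D1\<^sup>2 / \<beta> / \<gamma>) + D1\<^sup>2 / \<beta> / \<gamma>"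
        by (rule comparison[OF gpos Wder Wineq t])
      have "exp (- \<gamma> * t) * (W 0 - D1\<^sup>2 / \<beta> / \<gamma>) \<le> exp (- \<gamma> * t) * \<bar>W 0\<bar>"
      proof (rule mult_left_mono)
        have "D1\<^sup>2 / \<beta> / \<gamma> \<ge> 0" using bpos gpos by simp
        then show "W 0 - D1\<^sup>2 / \<beta> / \<gamma> \<le> \<bar>W 0\<bar>" by linarith
      qed simp
      then have main: "m1 * (N t)\<^sup>2 \<le> exp (- \<gamma> * t) * \<bar>W 0\<bar> + D1\<^sup>2 / \<beta> / \<gamma>"
        using cmp Wlow[OF t] by linarith
      have D1le: "D1 \<le> \<kappa> * (sd + se + Lmax * sw)"
      proof -
        have "Pb \<le> \<kappa> * Lmax" unfolding \<kappa>_def using Lmax_pos by (simp add: algebra_simps)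
        then have "Pb * sw \<le> \<kappa> * Lmax * sw" using sw0 by (simp add: mult_right_mono)
        moreover have "sd \<le> \<kappa> * sd" "se \<le> \<kappa> * se" using kge sd0 se0
          by (simp_all add: mult_right_mono[of 1 \<kappa>, simplified])
        ultimately show ?thesis unfolding D1_def by (simp add: algebra_simps)
      qed
      have "N t \<le> sqrt (\<bar>W 0\<bar> / m1) * exp (- \<alpha> * t) + 1 / (\<alpha> * L) * (sd + se + Lmax * sw)"
        by (rule final_arith[OF m1pos bpos gpos Lpos kge apos al1 al2 _ D1le t _ _ main])
           (auto simp: \<alpha>_def D1_def sd0 se0 sw0 Pb0 N_def min_le_iff_disj)
      then show "norm (stack (s t) (atil t)) \<le> sqrt (\<bar>W 0\<bar> / m1) * exp (- \<alpha> * t)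
          + (1 / (\<alpha> * lam_min_all (\<lambda>t. block_diag (M t) (Pinv t))))
            * (sup_norm d + sup_norm (\<lambda>t. transpose (\<phi> t) *v (matrix_inv R *v \<epsilon> t))
               + lam_max_all Pinv * sup_norm (\<lambda>t. lam *\<^sub>R a t + a' t))"
        unfolding N_def L_def sd_def se_def sw_def e_def w_def Lmax_def by simp
    qed
  qed
qed

end
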